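(* Let $\mathscr{a}\in\mathbb{R}$, $\mathscr{b}\in(\mathscr{a},\infty)$, $\rho\in(0,\infty)$, $\alpha,\beta\in\mathbb{R}$, for $\theta=(\theta_1,\theta_2,\theta_3,\theta_4)\in\mathbb{R}^4$ and $x\in\mathbb{R}$ let $\mathscr{N}^\theta(x)=\theta_3\max\{\theta_1x+\theta_2,0\}+\theta_4$ and $\mathcal{L}(\theta)=\rho\int_{\mathscr{a}}^{\mathscr{b}}(\mathscr{N}^\theta(y)-(\alpha y+\beta))^2\,\mathrm{d}y$, and let $\theta\in\mathbb{R}^4$ satisfy $\mathcal{L}(\theta)<\frac{\rho\alpha^2(\mathscr{b}-\mathscr{a})^3}{12}$. Then $\alpha\theta_1\theta_3>0$. *)

theory Defs
  imports "HOL-Analysis.Analysis"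
begin

definition relu_net :: "real \<Rightarrow> real \<Rightarrow> real \<Rightarrow> real \<Rightarrow> real \<Rightarrow> real" where
  "relu_net t1 t2 t3 t4 x = t3 * max (t1 * x + t2) 0 + t4"

definition risk :: "real \<Rightarrow> real \<Rightarrow> real \<Rightarrow> real \<Rightarrow> real \<Rightarrow> real \<Rightarrow> real \<Rightarrow> real \<Rightarrow> real \<Rightarrow> real" where
  "risk a b rho alpha beta t1 t2 t3 t4 =
     rho * integral {a..b} (\<lambda>y. (relu_net t1 t2 t3 t4 y - (alpha * y + beta))^2)"

end

theory Submission
  imports Defs
begin

lemma key_int:
  fixes a b A C :: real
  assumes "a \<le> b"
  defines "m \<equiv> (a + b) / 2"
  shows "((\<lambda>y. A\<^sup>2 * (y - m)\<^sup>2 + 2 * A * C * (y - m)) has_integral A\<^sup>2 * (b - a)^3 / 12) {a..b}"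
proof -
  let ?F = "\<lambda>y. A\<^sup>2 * (y - m)^3 / 3 + A * C * (y - m)\<^sup>2"
  have "((\<lambda>y. A\<^sup>2 * (y - m)\<^sup>2 + 2 * A * C * (y - m)) has_integral ?F b - ?F a) {a..b}"
  proof (rule fundamental_theorem_of_calculus[OF assms(1)])
    fix x assume "x \<in> {a..b}"
    show "(?F has_vector_derivative A\<^sup>2 * (x - m)\<^sup>2 + 2 * A * C * (x - m)) (at x within {a..b})"
      unfolding has_real_derivative_iff_has_vector_derivative[symmetric]
      by (auto intro!: derivative_eq_intros simp: power2_eq_square field_simps)
  qed
  moreover have "?F b - ?F a = A\<^sup>2 * (b - a)^3 / 12"
    unfolding m_def by (simp add: field_simps power2_eq_square power3_eq_cube)
  ultimately show ?thesis by simp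
qed

lemma sign_part:
  fixes alpha t1 t2 t3 y m :: real
  assumes "\<not> alpha * t1 * t3 > 0"
  shows "alpha * (y - m) * (t3 * (max (t1 * y + t2) 0 - max (t1 * m + t2) 0)) \<le> 0"
proof (cases "t1 = 0")
  case True then show ?thesis by simp
next
  case False
  define D where "D = max (t1 * y + t2) 0 - max (t1 * m + t2) 0"
  have h1: "t1 * (y - m) * D \<ge> 0"
  proof (cases "t1 * (y - m) \<ge> 0")
    case True
    then have "D \<ge> 0" unfolding D_def by (auto simp: algebra_simps max_def)
    with True show ?thesis by simp
  next
    case f: False
    then have "D \<le> 0" unfolding D_def by (auto simp: algebra_simps max_def)
    with f show ?thesis by (simp add: mult_nonpos_nonpos)
  qed
  have "alpha * (y - m) * (t3 * D) * t1\<^sup>2 = (alpha * t1 * t3) * (t1 * (y - m) * D)"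
    by (simp add: power2_eq_square algebra_simps)
  also have "\<dots> \<le> 0" using assms h1 by (simp add: mult_nonpos_nonneg)
  finally have "alpha * (y - m) * (t3 * D) * t1\<^sup>2 \<le> 0" .
  moreover have "t1\<^sup>2 > 0" using False by simp
  ultimately show ?thesis unfolding D_def[symmetric]
    by (simp add: mult_le_0_iff)
qed

theorem corollary5p6:
  fixes a b rho alpha beta t1 t2 t3 t4 :: real
  assumes "a < b" and "rho > 0"
    and "risk a b rho alpha beta t1 t2 t3 t4 < rho * alpha^2 * (b - a)^3 / 12"
  shows "alpha * t1 * t3 > 0"
proof (rule ccontr)
  assume na: "\<not> alpha * t1 * t3 > 0"
  define m where "m = (a + b) / 2"
  define N where "N = (\<lambda>y. relu_net t1 t2 t3 t4 y)"
  define c where "c = alpha * m + beta - N m"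
  let ?h = "\<lambda>y. (relu_net t1 t2 t3 t4 y - (alpha * y + beta))^2"
  have pw: "alpha\<^sup>2 * (y - m)\<^sup>2 + 2 * alpha * c * (y - m) \<le> ?h y" for y
  proof -
    define h where "h = alpha * y + beta - N y"
    have sp: "alpha * (y - m) * (N y - N m) \<le> 0"
      using sign_part[OF na, of y m t2] unfolding N_def relu_net_def by (simp add: algebra_simps)
    have hy: "h = alpha * (y - m) + c - (N y - N m)" unfolding h_def c_def by (simp add: algebra_simps)
    have "0 \<le> (h - alpha * (y - m))\<^sup>2" by simp
    then have "h\<^sup>2 \<ge> 2 * alpha * (y - m) * h - alpha\<^sup>2 * (y - m)\<^sup>2"
      by (simp add: power2_eq_square algebra_simps)
    moreover have "2 * alpha * (y - m) * h - alpha\<^sup>2 * (y - m)\<^sup>2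
        = alpha\<^sup>2 * (y - m)\<^sup>2 + 2 * alpha * c * (y - m) - 2 * (alpha * (y - m) * (N y - N m))"
      unfolding hy by (simp add: power2_eq_square algebra_simps)
    moreover have "?h y = h\<^sup>2" unfolding h_def N_def by (simp add: power2_eq_square algebra_simps)
    ultimately show ?thesis using sp by linarith
  qed
  have cont: "continuous_on {a..b} ?h"
    unfolding relu_net_def by (intro continuous_intros)
  have int: "?h integrable_on {a..b}"
    using integrable_continuous_interval[OF cont] .
  have ki: "((\<lambda>y. alpha\<^sup>2 * (y - m)\<^sup>2 + 2 * alpha * c * (y - m)) has_integral alpha\<^sup>2 * (b - a)^3 / 12) {a..b}"
    unfolding m_def using key_int[of a b alpha c] assms(1) by simp
  have "alpha\<^sup>2 * (b - a)^3 / 12 \<le> integral {a..b} ?h"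
    using has_integral_le[OF ki integrable_integral[OF int]] pw by auto
  then have "rho * (alpha\<^sup>2 * (b - a)^3 / 12) \<le> risk a b rho alpha beta t1 t2 t3 t4"
    unfolding risk_def using assms(2) by (simp add: mult_left_mono)
  then show False using assms(3) by simp
qed

end
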